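(* Let $1\le n\le N$, $E\in\mathbb R$, $\mathcal J\in\mathbb N$, let $\tilde C(n)>0$ be a constant depending only on $n$, let $l,L\ge1$ and let $\Lambda^{(n)}_L(\mathbf u)$ be an $n$-particle cube. Assume there exist $\mathcal J$ cubes $\Lambda^{(n)}_{\tilde C(n)l}(\mathbf k^{(1)}),\dots,\Lambda^{(n)}_{\tilde C(n)l}(\mathbf k^{(\mathcal J)})$ such that for every $\mathbf v\in\mathbb Z^{nd}$ not belonging to any of these cubes, $\Lambda^{(n)}_l(\mathbf v)$ is $(E,\tfrac12)$-NS. Then, if $l>2\tilde C(n)$, the cube $\Lambda^{(n)}_L(\mathbf u)$ can be decomposed into two disjoint subsets $\Lambda^{(n)}_L(\mathbf u)=B\cup G$ such that $B=\bigcup_j\Omega_j$ is a finite union with $\operatorname{diam}(\Omega_j)\le(2\mathcal J+1)l^2$ for each $j$ and $\operatorname{dist}(\Omega_j,\Omega_{j'})\ge l^2$ for $j\ne j'$, and for every $\mathbf v\in G$ the cube $\Lambda^{(n)}_l(\mathbf v)$ is $(E,\tfrac12)$-NS.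
   Context: Points of $\mathbb Z^{nd}$ are $\mathbf x=(x_1,\dots,x_n)$, $x_j\in\mathbb Z^d$, $\|x_j\|=\max_i|x_j^{(i)}|$, $\|\mathbf x\|=\max_j\|x_j\|$, $\langle\mathbf x\rangle=\max\{1,\|\mathbf x\|\}$; distances and diameters are taken in this max norm. Cubes $\Lambda^{(n)}_L(\mathbf u)=\{\mathbf x\in\mathbb Z^{nd}:\|\mathbf x-\mathbf u\|\le L\}$. The $n$-particle operator is $\mathbf H^{(n)}=\frac1g(\mathbf T+\mathbf U)+\mathbf V$ on $\ell^2(\mathbb Z^{nd})$ ($g\ne0$, $r>0$): $\mathbf T(\mathbf x,\mathbf y)=\langle y_j-x_j\rangle^{-r}$ if there is $j$ with $x_i=y_i$ for all $i\ne j$, else $0$; $\mathbf U(\mathbf x)=\sum_{j_1<j_2}U(x_{j_1},x_{j_2})$ with $U$ bounded symmetric, vanishing when $\|x-x'\|\ge\mathrm r_0$; $\mathbf V(\mathbf x)=\sum_jV(x_j)$ with real $V(x)$. $\mathbf H^{(n)}_\Lambda$ is the restriction to $\Lambda$ and $\mathbf G^{(n)}_\Lambda(E)=(\mathbf H^{(n)}_\Lambda-E)^{-1}$. Sobolev norm of a matrix $\mathcal M$ on $X\times Y$: $\|\mathcal M\|_s^2=C_0\sum_{\mathbf v\in X-Y}(\sup_{\mathbf x-\mathbf y=\mathbf v}|\mathcal M(\mathbf x,\mathbf y)|)^2\langle\mathbf v\rangle^{2s}$, $C_0=C_0(s_0^{(n)})>0$ fixed. With parameters $\tau_n\ge0$,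 $nd/2<s_0^{(n)}\le r_n<r-nd/2$, a cube $\Lambda^{(n)}_l(\mathbf v)$ is $(E,\tfrac12)$-NS if $\mathbf G^{(n)}_{\Lambda^{(n)}_l(\mathbf v)}(E)$ exists and $\|\mathbf G^{(n)}_{\Lambda^{(n)}_l(\mathbf v)}(E)\|_s\le l^{\tau_n+s/2}$ for all $s\in[s_0^{(n)},r_n]$. *)

theory Defs
  imports "HOL-Analysis.Analysis"
begin

text \<open>Points of Z^{nd}: x = (x_1,...,x_n), x_j in Z^d, encoded as (int^'d)^'n,
  with n = CARD('n), d = CARD('d).\<close>

type_synonym ('d,'n) pt = "((int, 'd) vec, 'n) vec"

definition onorm :: "int ^ 'd \<Rightarrow> real" where
  "onorm y = of_int (Max (range (\<lambda>i. \<bar>y $ i\<bar>)))"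

definition mnorm :: "('d::finite,'n::finite) pt \<Rightarrow> real" where
  "mnorm x = Max (range (\<lambda>j. onorm (x $ j)))"

definition obr :: "int ^ 'd \<Rightarrow> real" where
  "obr y = max 1 (onorm y)"

definition mbr :: "('d::finite,'n::finite) pt \<Rightarrow> real" where
  "mbr x = max 1 (mnorm x)"

definition pdist :: "('d::finite,'n::finite) pt \<Rightarrow> ('d,'n) pt \<Rightarrow> real" where
  "pdist x y = mnorm (x - y)"

definition cube :: "real \<Rightarrow> ('d::finite,'n::finite) pt \<Rightarrow> ('d,'n) pt set" where
  "cube L u = {x. pdist x u \<le> L}"

definition sdiam :: "('d::finite,'n::finite) pt set \<Rightarrow> real" where
  "sdiam A = (SUP p\<in>A \<times> A. pdist (fst p) (snd p))"

definition sdist :: "('d::finite,'n::finite) pt set \<Rightarrow> ('d,'n) pt set \<Rightarrow> real" where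
  "sdist A B = (INF p\<in>A \<times> B. pdist (fst p) (snd p))"

definition Tker :: "real \<Rightarrow> ('d::finite,'n::finite) pt \<Rightarrow> ('d,'n) pt \<Rightarrow> real" where
  "Tker r x y = (if (\<exists>j. \<forall>i. i \<noteq> j \<longrightarrow> x $ i = y $ i)
      then (let j = (SOME j. \<forall>i. i \<noteq> j \<longrightarrow> x $ i = y $ i) in obr (y $ j - x $ j) powr (- r))
      else 0)"

definition Upot :: "(int ^ 'd \<Rightarrow> int ^ 'd \<Rightarrow> real) \<Rightarrow> ('d::finite,'n::{finite,linorder}) pt \<Rightarrow> real" where
  "Upot U x = (\<Sum>j1\<in>UNIV. \<Sum>j2\<in>{j. j1 < j}. U (x $ j1) (x $ j2))"

definition Vpot :: "(int ^ 'd \<Rightarrow> real) \<Rightarrow> ('d::finite,'n::finite) pt \<Rightarrow> real" where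
  "Vpot V x = (\<Sum>j\<in>UNIV. V (x $ j))"

definition Hmat :: "real \<Rightarrow> real \<Rightarrow> (int ^ 'd \<Rightarrow> int ^ 'd \<Rightarrow> real) \<Rightarrow> (int ^ 'd \<Rightarrow> real)
    \<Rightarrow> ('d::finite,'n::{finite,linorder}) pt \<Rightarrow> ('d,'n) pt \<Rightarrow> real" where
  "Hmat g r U V x y = (1 / g) * (Tker r x y + (if x = y then Upot U x else 0))
      + (if x = y then Vpot V x else 0)"

definition is_green :: "(('d::finite,'n::finite) pt \<Rightarrow> ('d,'n) pt \<Rightarrow> real) \<Rightarrow> ('d,'n) pt set \<Rightarrow> real
    \<Rightarrow> (('d,'n) pt \<Rightarrow> ('d,'n) pt \<Rightarrow> real) \<Rightarrow> bool" where
  "is_green H Lam E G \<longleftrightarrow>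
     (\<forall>x\<in>Lam. \<forall>y\<in>Lam. (\<Sum>z\<in>Lam. (H x z - (if x = z then E else 0)) * G z y) = (if x = y then 1 else 0))
   \<and> (\<forall>x\<in>Lam. \<forall>y\<in>Lam. (\<Sum>z\<in>Lam. G x z * (H z y - (if z = y then E else 0))) = (if x = y then 1 else 0))"

definition green_exists :: "(('d::finite,'n::finite) pt \<Rightarrow> ('d,'n) pt \<Rightarrow> real) \<Rightarrow> ('d,'n) pt set \<Rightarrow> real \<Rightarrow> bool" where
  "green_exists H Lam E \<longleftrightarrow> (\<exists>G. is_green H Lam E G)"

definition green :: "(('d::finite,'n::finite) pt \<Rightarrow> ('d,'n) pt \<Rightarrow> real) \<Rightarrow> ('d,'n) pt set \<Rightarrow> real
    \<Rightarrow> ('d,'n) pt \<Rightarrow> ('d,'n) pt \<Rightarrow> real" where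
  "green H Lam E = (\<lambda>x y. if x \<in> Lam \<and> y \<in> Lam then (SOME G. is_green H Lam E G) x y else 0)"

definition sobnorm :: "real \<Rightarrow> real \<Rightarrow> ('d::finite,'n::finite) pt set \<Rightarrow> ('d,'n) pt set
    \<Rightarrow> (('d,'n) pt \<Rightarrow> ('d,'n) pt \<Rightarrow> real) \<Rightarrow> real" where
  "sobnorm C0 s X Y M = sqrt (C0 * (\<Sum>v\<in>{x - y | x y. x \<in> X \<and> y \<in> Y}.
      (SUP p\<in>{(x, y). x \<in> X \<and> y \<in> Y \<and> x - y = v}. \<bar>M (fst p) (snd p)\<bar>)\<^sup>2 * mbr v powr (2 * s)))"

definition NS :: "real \<Rightarrow> real \<Rightarrow> (int ^ 'd \<Rightarrow> int ^ 'd \<Rightarrow> real) \<Rightarrow> (int ^ 'd \<Rightarrow> real)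
    \<Rightarrow> real \<Rightarrow> real \<Rightarrow> real \<Rightarrow> real \<Rightarrow> real \<Rightarrow> real \<Rightarrow> ('d::finite,'n::{finite,linorder}) pt \<Rightarrow> bool" where
  "NS g r U V C0 tau s0 rn E l v \<longleftrightarrow>
     green_exists (Hmat g r U V) (cube l v) E \<and>
     (\<forall>s. s0 \<le> s \<and> s \<le> rn \<longrightarrow>
        sobnorm C0 s (cube l v) (cube l v) (green (Hmat g r U V) (cube l v) E) \<le> l powr (tau + s / 2))"

end

theory Submission
  imports Defs "HOL-Library.Transitive_Closure_Table"
begin

lemma onorm_ge: "real_of_int \<bar>y $ i\<bar> \<le> onorm y"
proof -
  have "\<bar>y $ i\<bar> \<le> Max (range (\<lambda>i. \<bar>y $ i\<bar>))" by (rule Max_ge) auto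
  then show ?thesis unfolding onorm_def by linarith
qed

lemma onorm_le: "(\<And>i. real_of_int \<bar>y $ i\<bar> \<le> c) \<Longrightarrow> onorm y \<le> c"
proof -
  assume h: "\<And>i. real_of_int \<bar>y $ i\<bar> \<le> c"
  have "Max (range (\<lambda>i. \<bar>y $ i\<bar>)) \<in> range (\<lambda>i. \<bar>y $ i\<bar>)"
    by (rule Max_in) auto
  then obtain i where "Max (range (\<lambda>i. \<bar>y $ i\<bar>)) = \<bar>y $ i\<bar>" by (metis rangeE)
  then show ?thesis using h[of i] unfolding onorm_def by simp
qed

lemma mnorm_ge: "onorm (x $ j) \<le> mnorm x"
  unfolding mnorm_def by (simp add: Max_ge)

lemma mnorm_le: "(\<And>j. onorm (x $ j) \<le> c) \<Longrightarrow> mnorm x \<le> c"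
proof -
  assume h: "\<And>j. onorm (x $ j) \<le> c"
  have "Max (range (\<lambda>j. onorm (x $ j))) \<in> range (\<lambda>j. onorm (x $ j))"
    by (rule Max_in) auto
  then obtain j where "Max (range (\<lambda>j. onorm (x $ j))) = onorm (x $ j)" by (metis rangeE)
  then show ?thesis using h[of j] unfolding mnorm_def by simp
qed

lemma onorm_add: "onorm (a + b) \<le> onorm a + onorm b"
proof (rule onorm_le)
  fix i
  have "\<bar>(a + b) $ i\<bar> \<le> \<bar>a $ i\<bar> + \<bar>b $ i\<bar>" by (simp add: abs_triangle_ineq)
  then have "real_of_int \<bar>(a + b) $ i\<bar> \<le> real_of_int \<bar>a $ i\<bar> + real_of_int \<bar>b $ i\<bar>" by linarith
  then show "real_of_int \<bar>(a + b) $ i\<bar> \<le> onorm a + onorm b"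
    using onorm_ge[of a i] onorm_ge[of b i] by linarith
qed

lemma onorm_neg: "onorm (- a) = onorm a"
  unfolding onorm_def by simp

lemma mnorm_add: "mnorm (a + b) \<le> mnorm a + mnorm b"
proof (rule mnorm_le)
  fix j
  show "onorm ((a + b) $ j) \<le> mnorm a + mnorm b"
    using onorm_add[of "a $ j" "b $ j"] mnorm_ge[of a j] mnorm_ge[of b j] by simp
qed

lemma mnorm_neg: "mnorm (- a) = mnorm a"
  unfolding mnorm_def by (simp add: onorm_neg)

lemma pdist_sym: "pdist x y = pdist y x"
  unfolding pdist_def by (metis mnorm_neg minus_diff_eq)

lemma pdist_tri: "pdist x z \<le> pdist x y + pdist y z"
  unfolding pdist_def using mnorm_add[of "x - y" "y - z"] by simp


lemma path_in:
  assumes "rtrancl_path r a xs b" "\<And>x y. r x y \<Longrightarrow> y \<in> I"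
  shows "set xs \<subseteq> I"
  using assms by (induct rule: rtrancl_path.induct) auto

lemma path_bound:
  fixes d :: "'a \<Rightarrow> 'a \<Rightarrow> real" and A :: "nat \<Rightarrow> 'a set"
  assumes tri: "\<And>x y z. d x z \<le> d x y + d y z"
    and diamA: "\<And>j x y. j \<in> S \<Longrightarrow> x \<in> A j \<Longrightarrow> y \<in> A j \<Longrightarrow> d x y \<le> \<delta>"
    and rdef: "\<And>i j. r i j \<Longrightarrow> j \<in> S \<and> (\<exists>x\<in>A i. \<exists>y\<in>A j. d x y < \<delta>)"
    and p: "rtrancl_path r a xs b" and a: "a \<in> S"
  shows "\<forall>x\<in>A a. \<forall>y\<in>A b. d x y \<le> (2 * real (length xs) + 1) * \<delta>"
  using p a
proof (induct rule: rtrancl_path.induct)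
  case (base x)
  then show ?case using diamA by simp
next
  case (step a c ys b)
  from rdef[OF step(1)] obtain p q where pq: "p \<in> A a" "q \<in> A c" "d p q < \<delta>" and cS: "c \<in> S" by blast
  have IH: "\<forall>x\<in>A c. \<forall>y\<in>A b. d x y \<le> (2 * real (length ys) + 1) * \<delta>" using step(3) cS by blast
  show ?case
  proof (intro ballI)
    fix x y assume x: "x \<in> A a" and y: "y \<in> A b"
    have "d x y \<le> d x p + d p y" by (rule tri)
    also have "d p y \<le> d p q + d q y" by (rule tri)
    finally have "d x y \<le> d x p + d p q + d q y" by simp
    moreover have "d x p \<le> \<delta>" using diamA[OF step(4) x pq(1)] .
    moreover have "d q y \<le> (2 * real (length ys) + 1) * \<delta>" using IH pq(2) y by blast
    ultimately show "d x y \<le> (2 * real (length (c # ys)) + 1) * \<delta>" using pq(3) by (simp add: algebra_simps)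
  qed
qed

lemma cluster:
  fixes A :: "nat \<Rightarrow> 'a set" and d :: "'a \<Rightarrow> 'a \<Rightarrow> real"
  assumes sym: "\<And>x y. d x y = d y x" and tri: "\<And>x y z. d x z \<le> d x y + d y z"
    and diamA: "\<And>j x y. j \<in> {1..J} \<Longrightarrow> x \<in> A j \<Longrightarrow> y \<in> A j \<Longrightarrow> d x y \<le> \<delta>"
    and dpos: "\<delta> \<ge> 0"
  shows "\<exists>(K::nat) \<Omega>. (\<Union>j<K. \<Omega> j) = (\<Union>j\<in>{1..J}. A j) \<and>
     (\<forall>j<K. \<Omega> j \<noteq> {} \<and> (\<forall>x\<in>\<Omega> j. \<forall>y\<in>\<Omega> j. d x y \<le> (2 * real J + 1) * \<delta>)) \<and>
     (\<forall>j<K. \<forall>j'<K. j \<noteq> j' \<longrightarrow> (\<forall>x\<in>\<Omega> j. \<forall>y\<in>\<Omega> j'. d x y \<ge> \<delta>))"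
proof -
  define I where "I = {j\<in>{1..J}. A j \<noteq> {}}"
  define r where "r = (\<lambda>i j. i \<in> I \<and> j \<in> I \<and> (\<exists>x\<in>A i. \<exists>y\<in>A j. d x y < \<delta>))"
  have rsym: "symp r" unfolding r_def symp_def using sym by metis
  define cls where "cls = (\<lambda>i. {j\<in>I. r\<^sup>*\<^sup>* i j})"
  define C where "C = cls ` I"
  have finI: "finite I" unfolding I_def by auto
  have "card I \<le> card {1..J}" by (rule card_mono) (auto simp: I_def)
  then have cardI: "card I \<le> J" by simp
  have finC: "finite C" unfolding C_def using finI by simp
  obtain h where h: "bij_betw h {0..<card C} C" using ex_bij_betw_nat_finite[OF finC] by blast
  define K where "K = card C"
  define \<Omega> where "\<Omega> = (\<lambda>n. \<Union>j\<in>h n. A j)"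
  have hC: "\<And>n. n < K \<Longrightarrow> \<exists>i\<in>I. h n = cls i"
    using h unfolding K_def C_def bij_betw_def by (metis atLeastLessThan_iff imageE image_eqI zero_le)
  have self: "\<And>i. i \<in> I \<Longrightarrow> i \<in> cls i" unfolding cls_def by simp
  have rsymstar: "\<And>a b. r\<^sup>*\<^sup>* a b \<Longrightarrow> r\<^sup>*\<^sup>* b a"
    using sympD[OF symp_rtranclp[OF rsym]] by blast 
  have U: "(\<Union>j<K. \<Omega> j) = (\<Union>j\<in>{1..J}. A j)"
  proof
    show "(\<Union>j<K. \<Omega> j) \<subseteq> (\<Union>j\<in>{1..J}. A j)"
    proof
      fix x assume "x \<in> (\<Union>j<K. \<Omega> j)"
      then obtain n j where "n < K" "j \<in> h n" "x \<in> A j" unfolding \<Omega>_def by auto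
      then obtain i where "h n = cls i" using hC by blast
      then have "j \<in> I" using \<open>j \<in> h n\<close> unfolding cls_def by auto
      then show "x \<in> (\<Union>j\<in>{1..J}. A j)" using \<open>x \<in> A j\<close> unfolding I_def by auto
    qed
  next
    show "(\<Union>j\<in>{1..J}. A j) \<subseteq> (\<Union>j<K. \<Omega> j)"
    proof
      fix x assume "x \<in> (\<Union>j\<in>{1..J}. A j)"
      then obtain j where j: "j \<in> {1..J}" "x \<in> A j" by auto
      then have jI: "j \<in> I" unfolding I_def by auto
      then have "cls j \<in> C" unfolding C_def by auto
      then obtain n where "n < K" "h n = cls j"
        using h unfolding K_def bij_betw_def by (metis atLeastLessThan_iff imageE)
      then show "x \<in> (\<Union>j<K. \<Omega> j)" using self[OF jI] j unfolding \<Omega>_def by auto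
    qed
  qed
  have NE: "\<forall>j<K. \<Omega> j \<noteq> {}"
  proof (intro allI impI)
    fix n assume "n < K"
    then obtain i where "i \<in> I" "h n = cls i" using hC by blast
    then show "\<Omega> n \<noteq> {}" using self unfolding \<Omega>_def I_def by auto
  qed
  have DI: "\<forall>j<K. \<forall>x\<in>\<Omega> j. \<forall>y\<in>\<Omega> j. d x y \<le> (2 * real J + 1) * \<delta>"
  proof (intro allI impI ballI)
    fix n x y assume "n < K" "x \<in> \<Omega> n" "y \<in> \<Omega> n"
    then obtain i where i: "i \<in> I" "h n = cls i" using hC by blast
    obtain a b where ab: "a \<in> cls i" "b \<in> cls i" "x \<in> A a" "y \<in> A b"
      using \<open>x \<in> \<Omega> n\<close> \<open>y \<in> \<Omega> n\<close> i unfolding \<Omega>_def by auto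
    have aI: "a \<in> I" using ab unfolding cls_def by auto
    have "r\<^sup>*\<^sup>* i a" "r\<^sup>*\<^sup>* i b" using ab unfolding cls_def by auto
    then have "r\<^sup>*\<^sup>* a b" using rsymstar rtranclp_trans by metis
    then obtain xs where "rtrancl_path r a xs b" using rtranclp_eq_rtrancl_path by metis
    then obtain xs' where p: "rtrancl_path r a xs' b" and dist: "distinct (a # xs')"
      using rtrancl_path_distinct by metis
    have "set xs' \<subseteq> I" using path_in[OF p, of I] unfolding r_def by blast
    then have "set (a # xs') \<subseteq> I" using aI by simp
    then have "card (set (a # xs')) \<le> card I" using finI card_mono by blast
    then have "length (a # xs') \<le> J" using cardI distinct_card[OF dist] by simp
    then have len: "real (length xs') \<le> real J" by simp
    have "\<forall>x\<in>A a. \<forall>y\<in>A b. d x y \<le> (2 * real (length xs') + 1) * \<delta>"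
    proof (rule path_bound[OF tri, where S=I and A=A and \<delta>=\<delta> and r=r])
      show "\<And>j x y. j \<in> I \<Longrightarrow> x \<in> A j \<Longrightarrow> y \<in> A j \<Longrightarrow> d x y \<le> \<delta>"
        using diamA unfolding I_def by blast
      show "\<And>i j. r i j \<Longrightarrow> j \<in> I \<and> (\<exists>x\<in>A i. \<exists>y\<in>A j. d x y < \<delta>)"
        unfolding r_def by blast
    qed (rule p, rule aI)
    then have "d x y \<le> (2 * real (length xs') + 1) * \<delta>" using ab by blast
    also have "\<dots> \<le> (2 * real J + 1) * \<delta>" using len dpos by (intro mult_right_mono) auto
    finally show "d x y \<le> (2 * real J + 1) * \<delta>" .
  qed
  have SEP: "\<forall>j<K. \<forall>j'<K. j \<noteq> j' \<longrightarrow> (\<forall>x\<in>\<Omega> j. \<forall>y\<in>\<Omega> j'. d x y \<ge> \<delta>)"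
  proof (intro allI impI ballI)
    fix n n' x y assume nn: "n < K" "n' < K" "n \<noteq> n'" and xy: "x \<in> \<Omega> n" "y \<in> \<Omega> n'"
    show "d x y \<ge> \<delta>"
    proof (rule ccontr)
      assume "\<not> d x y \<ge> \<delta>"
      then have lt: "d x y < \<delta>" by simp
      obtain i where i: "i \<in> I" "h n = cls i" using hC nn by blast
      obtain i' where i': "i' \<in> I" "h n' = cls i'" using hC nn by blast
      obtain a b where ab: "a \<in> cls i" "b \<in> cls i'" "x \<in> A a" "y \<in> A b"
        using xy i i' unfolding \<Omega>_def by auto
      have rab: "r a b" using ab lt unfolding r_def cls_def by auto
      have ria: "r\<^sup>*\<^sup>* i a" and "r\<^sup>*\<^sup>* i' b" using ab unfolding cls_def by auto
      have "r\<^sup>*\<^sup>* i b" using ria rab by (rule rtranclp.rtrancl_into_rtrancl)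
      moreover have "r\<^sup>*\<^sup>* b i'" using rsymstar \<open>r\<^sup>*\<^sup>* i' b\<close> by blast
      ultimately have ii: "r\<^sup>*\<^sup>* i i'" by (rule rtranclp_trans)
      have ii2: "r\<^sup>*\<^sup>* i' i" using rsymstar ii by blast
      have "cls i = cls i'" unfolding cls_def
        using rtranclp_trans[OF ii] rtranclp_trans[OF ii2] by blast
      then have "h n = h n'" using i i' by simp
      moreover have "inj_on h {0..<card C}" using h bij_betw_def by blast
      ultimately have "n = n'" using nn unfolding K_def by (simp add: inj_on_def)
      then show False using nn by simp
    qed
  qed
  have "(\<Union>j<K. \<Omega> j) = (\<Union>j\<in>{1..J}. A j) \<and>
     (\<forall>j<K. \<Omega> j \<noteq> {} \<and> (\<forall>x\<in>\<Omega> j. \<forall>y\<in>\<Omega> j. d x y \<le> (2 * real J + 1) * \<delta>)) \<and>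
     (\<forall>j<K. \<forall>j'<K. j \<noteq> j' \<longrightarrow> (\<forall>x\<in>\<Omega> j. \<forall>y\<in>\<Omega> j'. d x y \<ge> \<delta>))"
    using U NE DI SEP by simp
  note fin = this
  show ?thesis by (rule exI[where x=K], rule exI[where x=\<Omega>], rule fin)
qed

theorem lemma7p4:
  fixes u :: "((int, 'd::finite) vec, 'n::{finite,linorder}) vec"
    and g r r0 C0 tau s0 rn E Ct l L :: real
    and U :: "int ^ 'd \<Rightarrow> int ^ 'd \<Rightarrow> real" and V :: "int ^ 'd \<Rightarrow> real"
    and N J :: nat
    and k :: "nat \<Rightarrow> ((int, 'd) vec, 'n) vec"
  assumes "card (UNIV :: 'n set) \<le> N"
    and "g \<noteq> 0" and "r > 0"
    and "\<exists>M. \<forall>x y. \<bar>U x y\<bar> \<le> M"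
    and "\<forall>x y. U x y = U y x"
    and "\<forall>x y. onorm (x - y) \<ge> r0 \<longrightarrow> U x y = 0"
    and "C0 > 0" and "tau \<ge> 0"
    and "real (card (UNIV :: 'n set) * card (UNIV :: 'd set)) / 2 < s0" and "s0 \<le> rn"
    and "rn < r - real (card (UNIV :: 'n set) * card (UNIV :: 'd set)) / 2"
    and "Ct > 0" and "l \<ge> 1" and "L \<ge> 1"
    and "\<forall>v. (\<forall>j\<in>{1..J}. v \<notin> cube (Ct * l) (k j)) \<longrightarrow> NS g r U V C0 tau s0 rn E l v"
    and "l > 2 * Ct"
  shows "\<exists>B G (K::nat) (\<Omega>::nat \<Rightarrow> (((int, 'd) vec, 'n) vec) set).
           cube L u = B \<union> G \<and> B \<inter> G = {} \<and>
           B = (\<Union>j<K. \<Omega> j) \<and>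
           (\<forall>j<K. \<Omega> j \<noteq> {} \<and> sdiam (\<Omega> j) \<le> (2 * real J + 1) * l\<^sup>2) \<and>
           (\<forall>j<K. \<forall>j'<K. j \<noteq> j' \<longrightarrow> sdist (\<Omega> j) (\<Omega> j') \<ge> l\<^sup>2) \<and>
           (\<forall>v\<in>G. NS g r U V C0 tau s0 rn E l v)"
proof -
  let ?A = "\<lambda>j. cube L u \<inter> cube (Ct * l) (k j)"
  have lpos: "l > 0" using assms(13) by simp
  have ll: "2 * Ct * l \<le> l\<^sup>2"
    using assms(16) lpos by (simp add: power2_eq_square mult_right_mono)
  have diamA: "pdist x y \<le> l\<^sup>2" if "j \<in> {1..J}" "x \<in> ?A j" "y \<in> ?A j" for j x y
  proof -
    have "pdist x y \<le> pdist x (k j) + pdist (k j) y" by (rule pdist_tri)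
    moreover have "pdist x (k j) \<le> Ct * l" using that unfolding cube_def by simp
    moreover have "pdist (k j) y \<le> Ct * l" using that pdist_sym[of y "k j"] unfolding cube_def by simp
    ultimately show ?thesis using ll by linarith
  qed
  have ex: "\<exists>(K::nat) \<Omega>. (\<Union>j<K. \<Omega> j) = (\<Union>j\<in>{1..J}. ?A j) \<and>
     (\<forall>j<K. \<Omega> j \<noteq> {} \<and> (\<forall>x\<in>\<Omega> j. \<forall>y\<in>\<Omega> j. pdist x y \<le> (2 * real J + 1) * l\<^sup>2)) \<and>
     (\<forall>j<K. \<forall>j'<K. j \<noteq> j' \<longrightarrow> (\<forall>x\<in>\<Omega> j. \<forall>y\<in>\<Omega> j'. pdist x y \<ge> l\<^sup>2))"
    apply (rule cluster)
       apply (rule pdist_sym)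
      apply (rule pdist_tri)
     apply (erule diamA; assumption)
    by simp
  obtain K :: nat and \<Omega> where
    U: "(\<Union>j<K. \<Omega> j) = (\<Union>j\<in>{1..J}. ?A j)" and
    NE: "\<forall>j<K. \<Omega> j \<noteq> {} \<and> (\<forall>x\<in>\<Omega> j. \<forall>y\<in>\<Omega> j. pdist x y \<le> (2 * real J + 1) * l\<^sup>2)" and
    SEP: "\<forall>j<K. \<forall>j'<K. j \<noteq> j' \<longrightarrow> (\<forall>x\<in>\<Omega> j. \<forall>y\<in>\<Omega> j'. pdist x y \<ge> l\<^sup>2)"
    using ex by (elim exE conjE) (rule that)
  define B where "B = (\<Union>j<K. \<Omega> j)"
  define G where "G = cube L u - B"
  have BS: "B \<subseteq> cube L u" unfolding B_def U by auto
  have c1: "cube L u = B \<union> G" using BS unfolding G_def by auto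
  have c2: "B \<inter> G = {}" unfolding G_def by auto
  have c3: "\<forall>j<K. \<Omega> j \<noteq> {} \<and> sdiam (\<Omega> j) \<le> (2 * real J + 1) * l\<^sup>2"
  proof (intro allI impI conjI)
    fix j assume j: "j < K"
    then show "\<Omega> j \<noteq> {}" using NE by blast
    then have ne: "\<Omega> j \<times> \<Omega> j \<noteq> {}" by simp
    show "sdiam (\<Omega> j) \<le> (2 * real J + 1) * l\<^sup>2"
      unfolding sdiam_def
    proof (rule cSUP_least[OF ne])
      fix p assume "p \<in> \<Omega> j \<times> \<Omega> j"
      then show "pdist (fst p) (snd p) \<le> (2 * real J + 1) * l\<^sup>2" using NE j by auto
    qed
  qed
  have c4: "\<forall>j<K. \<forall>j'<K. j \<noteq> j' \<longrightarrow> sdist (\<Omega> j) (\<Omega> j') \<ge> l\<^sup>2"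
  proof (intro allI impI)
    fix j j' assume jj: "j < K" "j' < K" "j \<noteq> j'"
    then have ne: "\<Omega> j \<times> \<Omega> j' \<noteq> {}" using NE by simp
    show "sdist (\<Omega> j) (\<Omega> j') \<ge> l\<^sup>2"
      unfolding sdist_def
    proof (rule cINF_greatest[OF ne])
      fix p assume "p \<in> \<Omega> j \<times> \<Omega> j'"
      then show "l\<^sup>2 \<le> pdist (fst p) (snd p)" using SEP jj by auto
    qed
  qed
  have c5: "\<forall>v\<in>G. NS g r U V C0 tau s0 rn E l v"
  proof
    fix v assume v: "v \<in> G"
    have "\<forall>j\<in>{1..J}. v \<notin> cube (Ct * l) (k j)"
    proof
      fix j assume "j \<in> {1..J}"
      moreover have "v \<in> cube L u" "v \<notin> B" using v unfolding G_def by auto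
      ultimately show "v \<notin> cube (Ct * l) (k j)" unfolding B_def U by auto
    qed
    then show "NS g r U V C0 tau s0 rn E l v" using assms(15) by blast
  qed
  have "cube L u = B \<union> G \<and> B \<inter> G = {} \<and> B = (\<Union>j<K. \<Omega> j) \<and>
           (\<forall>j<K. \<Omega> j \<noteq> {} \<and> sdiam (\<Omega> j) \<le> (2 * real J + 1) * l\<^sup>2) \<and>
           (\<forall>j<K. \<forall>j'<K. j \<noteq> j' \<longrightarrow> sdist (\<Omega> j) (\<Omega> j') \<ge> l\<^sup>2) \<and>
           (\<forall>v\<in>G. NS g r U V C0 tau s0 rn E l v)"
    using c1 c2 c3 c4 c5 B_def by simp
  note fin = this
  show ?thesis by (rule exI[where x=B], rule exI[where x=G], rule exI[where x=K], rule exI[where x=\<Omega>], rule fin)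
qed

end
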